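(* Work in Scenario 2 with a common prior, and let $(\mathbf x,\mathbf p)$ be a BNIC mechanism. Then for each bidder $i$, the outside-option utility $V_i(\emptyset;t_i)$ does not depend on $t_i$, and the interim IR constraint $V_i(t_i;t_i)\ge V_i(\emptyset;t_i)$ holds for all $t_i\in T_i$ if and only if it holds for some type of the form $t_i=(\underline v_i,\boldsymbol\eta)$ with $\boldsymbol\eta\in\prod_{j\ne i}[\underline\eta_{j\leftarrow i},\bar\eta_{j\leftarrow i}]$.
   Context: Model: there are $n$ bidders $N=\{1,\dots,n\}$ and a seller of a freely replicable good; an allocation is any $\mathbf x\in[0,1]^n$. Bidder $i$ has value $v_i\in[\underline v_i,\bar v_i]\subset\mathbb R_{\ge0}$ and for $j\ne i$ parameters $\eta_{i\leftarrow j}\in[\underline\eta_{i\leftarrow j},\bar\eta_{i\leftarrow j}]\subset\mathbb R_{\ge0}$; valuation $\nu_i(\mathbf x)=v_ix_i-\sum_{j\ne i}\eta_{i\leftarrow j}x_j$, utility $\nu_i(\mathbf x)-p_i$. In Scenario 2, bidder $i$'s private type is $t_i=(v_i,(\eta_{j\leftarrow i})_{j\ne i})\in T_i=[\underline v_i,\bar v_i]\times\prod_{j\ne i}[\underline\eta_{j\leftarrow i},\bar\eta_{j\leftarrow i}]$. Bids lie in $B_i=T_i\cup\{\emptyset\}$; a mechanism is $\mathbf x:B\to[0,1]^n$, $\mathbf p:B\to\mathbb R^n_{\ge0}$ with $x_i=p_i=0$ when $i$ bids $\emptyset$, specified on profiles with at most one $\emptyset$. Common prior: types $t_i\sim F_i$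 independent across bidders. Interim utility: $V_i(\hat t_i;t_i)=\mathbb E[u_i(\mathbf x(\hat t_i,\mathbf t_{-i}),p_i(\hat t_i,\mathbf t_{-i});\mathbf t)\mid t_i]$ with $\mathbf t_{-i}\sim\prod_{j\ne i}F_j$ (others truthful), for $\hat t_i\in B_i$. BNIC: $V_i(t_i;t_i)\ge V_i(\hat t_i;t_i)$ for all $i$ and $t_i,\hat t_i\in T_i$. Interim IR: $V_i(t_i;t_i)\ge V_i(\emptyset;t_i)$. *)

theory Defs
  imports "HOL-Probability.Probability"
begin

text \<open>A type of bidder i is a pair
  (v, e) with v = v_i and e j = eta_{j<-i} for j different from i; the unused
  entry e i is fixed to 0.  A bid is an option: None is the empty bid.\<close>

type_synonym 'b btype = "real \<times> ('b \<Rightarrow> real)"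

definition Ttypes ::
  "('b \<Rightarrow> real) \<Rightarrow> ('b \<Rightarrow> real) \<Rightarrow> ('b \<Rightarrow> 'b \<Rightarrow> real) \<Rightarrow> ('b \<Rightarrow> 'b \<Rightarrow> real)
   \<Rightarrow> 'b \<Rightarrow> 'b btype set" where
  "Ttypes vlo vhi elo ehi i =
     {(v, e). vlo i \<le> v \<and> v \<le> vhi i \<and> e i = 0 \<and>
              (\<forall>j. j \<noteq> i \<longrightarrow> elo j i \<le> e j \<and> e j \<le> ehi j i)}"

text \<open>elo j i, ehi j i are the bounds of eta_{j<-i}.\<close>

text \<open>Utility of bidder i: nu_i(x) - p_i, with eta_{i<-j} = snd (t j) i.\<close>
definition util :: "('b::finite \<Rightarrow> real) \<Rightarrow> ('b \<Rightarrow> real) \<Rightarrow> ('b \<Rightarrow> 'b btype) \<Rightarrow> 'b \<Rightarrow> real" where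
  "util xv pv t i = fst (t i) * xv i - (\<Sum>j\<in>UNIV - {i}. snd (t j) i * xv j) - pv i"

definition is_mechanism ::
  "(('b \<Rightarrow> 'b btype option) \<Rightarrow> 'b \<Rightarrow> real) \<Rightarrow> (('b \<Rightarrow> 'b btype option) \<Rightarrow> 'b \<Rightarrow> real) \<Rightarrow> bool" where
  "is_mechanism x p \<longleftrightarrow>
     (\<forall>b i. 0 \<le> x b i \<and> x b i \<le> 1 \<and> 0 \<le> p b i \<and>
            (b i = None \<longrightarrow> x b i = 0 \<and> p b i = 0))"

definition interim_integrand ::
  "(('b::finite \<Rightarrow> 'b btype option) \<Rightarrow> 'b \<Rightarrow> real) \<Rightarrow> (('b \<Rightarrow> 'b btype option) \<Rightarrow> 'b \<Rightarrow> real)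
   \<Rightarrow> 'b \<Rightarrow> 'b btype option \<Rightarrow> 'b btype \<Rightarrow> ('b \<Rightarrow> 'b btype) \<Rightarrow> real" where
  "interim_integrand x p i bid ti s =
     util (x ((Some \<circ> s)(i := bid))) (p ((Some \<circ> s)(i := bid))) (s(i := ti)) i"

text \<open>Interim utility V_i(bid; ti): expectation over t_{-i} distributed as the product of the F j.\<close>
definition Vint ::
  "('b::finite \<Rightarrow> 'b btype measure) \<Rightarrow> (('b \<Rightarrow> 'b btype option) \<Rightarrow> 'b \<Rightarrow> real)
   \<Rightarrow> (('b \<Rightarrow> 'b btype option) \<Rightarrow> 'b \<Rightarrow> real) \<Rightarrow> 'b \<Rightarrow> 'b btype option \<Rightarrow> 'b btype \<Rightarrow> real" where
  "Vint F x p i bid ti = (\<integral>s. interim_integrand x p i bid ti s \<partial>(PiM (UNIV - {i}) F))"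

definition BNIC ::
  "('b \<Rightarrow> 'b btype set) \<Rightarrow> ('b::finite \<Rightarrow> 'b btype measure) \<Rightarrow> (('b \<Rightarrow> 'b btype option) \<Rightarrow> 'b \<Rightarrow> real)
   \<Rightarrow> (('b \<Rightarrow> 'b btype option) \<Rightarrow> 'b \<Rightarrow> real) \<Rightarrow> bool" where
  "BNIC T F x p \<longleftrightarrow>
     (\<forall>i ti th. ti \<in> T i \<longrightarrow> th \<in> T i \<longrightarrow> Vint F x p i (Some th) ti \<le> Vint F x p i (Some ti) ti)"

end

theory Submission
  imports Defs
begin


lemma integrand_none:
  assumes mech: "is_mechanism x p"
  shows "interim_integrand x p i None ti s = interim_integrand x p i None ti' s"
proof -
  have "(((Some \<circ> s)(i := None)) i) = None" by simp
  then have "x ((Some \<circ> s)(i := None)) i = 0" using mech unfolding is_mechanism_def by blast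
  moreover have "(\<Sum>j\<in>UNIV - {i}. snd ((s(i := ti)) j) i * xx j) = (\<Sum>j\<in>UNIV - {i}. snd ((s(i := ti')) j) i * xx j)" for xx :: "_ \<Rightarrow> real"
    by (rule sum.cong) auto
  ultimately show ?thesis unfolding interim_integrand_def util_def by simp
qed

lemma integrand_mono:
  assumes mech: "is_mechanism x p" and le: "a \<le> fst ti"
  shows "interim_integrand x p i (Some th) (a, e) s \<le> interim_integrand x p i (Some th) ti s"
proof -
  have x0: "0 \<le> x ((Some \<circ> s)(i := Some th)) i" using mech unfolding is_mechanism_def by blast
  have "(\<Sum>j\<in>UNIV - {i}. snd ((s(i := ti)) j) i * xx j) = (\<Sum>j\<in>UNIV - {i}. snd ((s(i := (a,e))) j) i * xx j)" for xx :: "_ \<Rightarrow> real"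
    by (rule sum.cong) auto
  moreover have "a * x ((Some \<circ> s)(i := Some th)) i \<le> fst ti * x ((Some \<circ> s)(i := Some th)) i"
    using x0 le by (simp add: mult_right_mono)
  ultimately show ?thesis unfolding interim_integrand_def util_def by simp
qed

theorem mainTheorem10:
  fixes vlo vhi :: "'b::finite \<Rightarrow> real"
    and elo ehi :: "'b \<Rightarrow> 'b \<Rightarrow> real"
    and F :: "'b \<Rightarrow> 'b btype measure"
    and x p :: "('b \<Rightarrow> 'b btype option) \<Rightarrow> 'b \<Rightarrow> real"
    and i :: 'b
  assumes bounds_v: "\<And>k. 0 \<le> vlo k \<and> vlo k \<le> vhi k"
    and bounds_eta: "\<And>j k. j \<noteq> k \<Longrightarrow> 0 \<le> elo j k \<and> elo j k \<le> ehi j k"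
    and prior: "\<And>k. prob_space (F k)"
    and prior_space: "\<And>k. space (F k) = Ttypes vlo vhi elo ehi k"
    and well_defined: "\<And>k bid tk. bid \<in> Some ` Ttypes vlo vhi elo ehi k \<union> {None} \<Longrightarrow>
        tk \<in> Ttypes vlo vhi elo ehi k \<Longrightarrow>
        integrable (PiM (UNIV - {k}) F) (interim_integrand x p k bid tk)"
    and mech: "is_mechanism x p"
    and bnic: "BNIC (Ttypes vlo vhi elo ehi) F x p"
  shows "(\<exists>c. \<forall>ti \<in> Ttypes vlo vhi elo ehi i. Vint F x p i None ti = c)
       \<and> ((\<forall>ti \<in> Ttypes vlo vhi elo ehi i. Vint F x p i (Some ti) ti \<ge> Vint F x p i None ti)
          \<longleftrightarrow> (\<exists>eta. (vlo i, eta) \<in> Ttypes vlo vhi elo ehi i \<and>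
                  Vint F x p i (Some (vlo i, eta)) (vlo i, eta) \<ge> Vint F x p i None (vlo i, eta)))"
proof -
  let ?T = "Ttypes vlo vhi elo ehi i"
  have P1: "\<exists>c. \<forall>ti \<in> ?T. Vint F x p i None ti = c"
  proof (intro exI ballI)
    fix ti
    have "(\<lambda>s. interim_integrand x p i None ti s) = (\<lambda>s. interim_integrand x p i None (vlo i, \<lambda>_. 0) s)"
      by (rule ext, rule integrand_none[OF mech])
    then show "Vint F x p i None ti = Vint F x p i None (vlo i, \<lambda>_. 0)" unfolding Vint_def by simp
  qed
  define eta0 where "eta0 = (\<lambda>j. if j = i then 0 else elo j i)"
  have eta0T: "(vlo i, eta0) \<in> ?T"
    using bounds_v bounds_eta unfolding Ttypes_def eta0_def by auto
  have P2: "(\<forall>ti \<in> ?T. Vint F x p i (Some ti) ti \<ge> Vint F x p i None ti)"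
    if ex: "\<exists>eta. (vlo i, eta) \<in> ?T \<and>
                  Vint F x p i (Some (vlo i, eta)) (vlo i, eta) \<ge> Vint F x p i None (vlo i, eta)"
  proof
    fix ti assume ti: "ti \<in> ?T"
    obtain eta where eT: "(vlo i, eta) \<in> ?T" and ge: "Vint F x p i (Some (vlo i, eta)) (vlo i, eta) \<ge> Vint F x p i None (vlo i, eta)"
      using ex by blast
    have vle: "vlo i \<le> fst ti" using ti unfolding Ttypes_def by auto
    have "Vint F x p i (Some (vlo i, eta)) (vlo i, eta) \<le> Vint F x p i (Some (vlo i, eta)) ti"
      unfolding Vint_def
      by (rule integral_mono[OF well_defined well_defined]) (use eT ti integrand_mono[OF mech vle] in auto)
    also have "\<dots> \<le> Vint F x p i (Some ti) ti"
      using bnic ti eT unfolding BNIC_def by blast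
    finally have "Vint F x p i None (vlo i, eta) \<le> Vint F x p i (Some ti) ti" using ge by linarith
    moreover have "Vint F x p i None (vlo i, eta) = Vint F x p i None ti"
    proof -
      have "(\<lambda>s. interim_integrand x p i None (vlo i, eta) s) = (\<lambda>s. interim_integrand x p i None ti s)"
        by (rule ext, rule integrand_none[OF mech])
      then show ?thesis unfolding Vint_def by simp
    qed
    ultimately show "Vint F x p i (Some ti) ti \<ge> Vint F x p i None ti" by simp
  qed
  show ?thesis using P1 P2 eta0T by blast
qed

end
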